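(* Let $n\in\mathbb{N}$. Then $\operatorname{Cong}(\Phi_n(t)) = 1$ if $n$ is square-free, and $\operatorname{Cong}(\Phi_n(t)) = 0$ if $n$ is not square-free. Moreover, $\operatorname{Cong}(\Psi_n(t)) = 0$ if and only if $n$ is composite.
   Context: $\Phi_n(t)$ is the $n$-th cyclotomic polynomial and $\Psi_n(t) := 1+t+\cdots+t^{n-1} = (t^n-1)/(t-1)$. For $r(t)=\sum_ia_it^i\in\mathbb{Z}[t]$ and integers $u>j\ge0$, $r_{u,j}(t):=\sum_{i\equiv j\bmod u}a_it^i$; $\operatorname{Cong}(r(t))$ is the non-negative generator of the ideal $\mathbb{Z}\cap\bigcap_{1<u\le\deg(r(t))+1}\big(r_{u,0}(t)\mathbb{Z}[t]+\cdots+r_{u,u-1}(t)\mathbb{Z}[t]\big)$. *)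

theory Defs
  imports Complex_Main "HOL-Computational_Algebra.Polynomial" "HOL-Computational_Algebra.Squarefree"
    "HOL-Computational_Algebra.Primes"
begin

definition cyclotomic_complex :: "nat \<Rightarrow> complex poly" where
  "cyclotomic_complex n =
     (\<Prod>k\<in>{k. k < n \<and> coprime k n}. [:- cis (2 * pi * real k / real n), 1:])"

text \<open>The n-th cyclotomic polynomial Phi_n as an integer polynomial (its coefficients are integers).\<close>
definition cyclotomic :: "nat \<Rightarrow> int poly" where
  "cyclotomic n = (THE p. map_poly of_int p = cyclotomic_complex n)"

definition Psi :: "nat \<Rightarrow> int poly" where
  "Psi n = (\<Sum>i<n. monom 1 i)"

definition part_poly :: "int poly \<Rightarrow> nat \<Rightarrow> nat \<Rightarrow> int poly" where
  "part_poly r u j = (\<Sum>i\<le>degree r. if i mod u = j then monom (coeff r i) i else 0)"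

definition cong_ideal :: "int poly \<Rightarrow> int set" where
  "cong_ideal r = {c. \<forall>u. 1 < u \<and> u \<le> degree r + 1 \<longrightarrow>
      (\<exists>q :: nat \<Rightarrow> int poly. [:c:] = (\<Sum>j<u. part_poly r u j * q j))}"

definition Cong :: "int poly \<Rightarrow> int" where
  "Cong r = (THE g. g \<ge> 0 \<and> cong_ideal r = {k * g | k. True})"

end

theory Submission
  imports Defs
begin


abbreviation ci :: "int poly \<Rightarrow> complex poly" where "ci \<equiv> map_poly of_int"

lemma ci_coeff[simp]: "coeff (ci p) i = of_int (coeff p i)"
  by (simp add: coeff_map_poly)
lemma ci_add[simp]: "ci (p + q) = ci p + ci q"
  by (intro poly_eqI) simp
lemma ci_diff[simp]: "ci (p - q) = ci p - ci q"
  by (intro poly_eqI) simp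
lemma ci_mult[simp]: "ci (p * q) = ci p * ci q"
  by (intro poly_eqI) (simp add: coeff_mult)
lemma ci_one[simp]: "ci 1 = 1" by simp
lemma ci_monom[simp]: "ci (monom c n) = monom (of_int c) n"
  by (simp add: map_poly_monom)
lemma ci_pCons[simp]: "ci [:c:] = [:of_int c:]"
  by (simp add: map_poly_pCons)
lemma ci_prod: "ci (prod f A) = (\<Prod>x\<in>A. ci (f x))"
  by (induction A rule: infinite_finite_induct) auto
lemma ci_sum: "ci (sum f A) = (\<Sum>x\<in>A. ci (f x))"
  by (induction A rule: infinite_finite_induct) auto
lemma ci_eq_iff[simp]: "ci p = ci q \<longleftrightarrow> p = q"
  by (auto simp: poly_eq_iff)
lemma ci_degree[simp]: "degree (ci p) = degree p"
  by (rule degree_map_poly) simp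
lemma ci_smult[simp]: "ci (smult c p) = smult (of_int c) (ci p)"
  by (intro poly_eqI) simp

lemma monic_div_int:
  fixes Q F :: "int poly" and G :: "complex poly"
  assumes "lead_coeff Q = 1" "ci F = ci Q * G"
  shows "\<exists>H. G = ci H"
proof -
  have Q0: "Q \<noteq> 0" using assms(1) by auto
  obtain q r where qr: "pseudo_divmod F Q = (q, r)" by (cases "pseudo_divmod F Q") auto
  from pseudo_divmod[OF Q0 qr] assms(1)
  have eq: "F = Q * q + r" and r: "r = 0 \<or> degree r < degree Q" by auto
  have "ci Q * (G - ci q) = ci r" using assms(2) eq by (simp add: algebra_simps)
  moreover have "G - ci q = 0"
  proof (rule ccontr)
    assume "G - ci q \<noteq> 0"
    moreover have "ci Q \<noteq> 0" using Q0 by (metis ci_eq_iff map_poly_0)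
    ultimately have "degree (ci Q * (G - ci q)) \<ge> degree Q"
      by (simp add: degree_mult_eq)
    moreover have "ci r \<noteq> 0" using \<open>ci Q \<noteq> 0\<close> \<open>G - ci q \<noteq> 0\<close>
      \<open>ci Q * (G - ci q) = ci r\<close> by (metis mult_eq_0_iff)
    ultimately show False using r \<open>ci Q * (G - ci q) = ci r\<close> by auto
  qed
  ultimately show ?thesis by auto
qed



definition om :: "nat \<Rightarrow> nat \<Rightarrow> complex" where "om n k = cis (2*pi*real k/real n)"

lemma om_eq_1: assumes "n > 0" shows "om n k = 1 \<longleftrightarrow> n dvd k"
proof
  assume "om n k = 1"
  then have "cos (2*pi*real k/real n) = 1" unfolding om_def
    by (metis Re_complex_of_real cis.sel(1) one_complex.sel(1))
  then obtain m :: int where m: "2*pi*real k/real n = of_int m * 2 * pi"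
    unfolding cos_one_2pi_int by blast
  then have "real k = of_int m * real n" using assms by (simp add: field_simps)
  then have "int k = m * int n" by (metis of_int_eq_iff of_int_mult of_int_of_nat_eq)
  then have "int n dvd int k" by simp
  then show "n dvd k" by simp
next
  assume "n dvd k"
  then obtain m where "k = n * m" by auto
  then have "2*pi*real k/real n = real m * (2*pi)" using assms by simp
  then have "om n k = cis (2*pi) ^ m" unfolding om_def DeMoivre by simp
  then show "om n k = 1" by simp
qed

lemma om_mult: "om n a * om n b = om n (a + b)"
  unfolding om_def cis_mult by (simp add: add_divide_distrib algebra_simps)

lemma om_pow: "om n k ^ m = om n (k * m)"
  unfolding om_def DeMoivre by (simp add: algebra_simps)

lemma om_nz[simp]: "om n k \<noteq> 0"
  unfolding om_def by simp

lemma om_mod: assumes "n > 0" shows "om n k = om n (k mod n)"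
proof -
  have "om n k = om n (n * (k div n)) * om n (k mod n)"
    by (simp add: om_mult)
  also have "om n (n * (k div n)) = 1" using assms by (simp add: om_eq_1)
  finally show ?thesis by simp
qed

lemma om_inj: assumes "n > 0" shows "inj_on (om n) {..<n}"
proof
  fix a b assume ab: "a \<in> {..<n}" "b \<in> {..<n}" "om n a = om n b"
  { fix a b assume ab: "a < n" "b < n" "om n a = om n b" "a \<le> b"
    have "om n a * om n (b - a) = om n b" using om_mult[of n a "b - a"] \<open>a \<le> b\<close> by simp
    with ab have "om n (b - a) = 1" by (metis mult_cancel_left1 om_nz)
    with assms have "n dvd (b - a)" by (simp add: om_eq_1)
    have "b - a < n" using ab by simp
    have "b - a = 0"
    proof (rule ccontr)
      assume "b - a \<noteq> 0"
      then show False using nat_dvd_not_less[of "b - a" n] \<open>b - a < n\<close> \<open>n dvd (b - a)\<close> by simp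
    qed
    then have "a = b" using \<open>a \<le> b\<close> by simp }
  note * = this
  from ab show "a = b" using *[of a b] *[of b a] by (cases "a \<le> b") auto
qed

lemma om_div: assumes "d dvd n" "n > 0" shows "om d k = om n (k * (n div d))"
proof -
  from assms obtain e where e: "n = d * e" by auto
  with assms have "d > 0" "e > 0" by auto
  then show ?thesis unfolding om_def using e by (simp add: field_simps)
qed

lemma om_geom: assumes "u > 0"
  shows "(\<Sum>k<u. om u (m * k)) = (if u dvd m then of_nat u else 0)"
proof (cases "u dvd m")
  case True
  then have "om u (m * k) = 1" for k using assms by (simp add: om_eq_1)
  then show ?thesis using True by simp
next
  case False
  define z where "z = om u m"
  have z1: "z \<noteq> 1" using False assms by (simp add: z_def om_eq_1)
  have zu: "z ^ u = 1" using assms by (simp add: z_def om_pow om_eq_1)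
  have "(z - 1) * (\<Sum>k<u. z ^ k) = 0" using power_diff_1_eq[of z u] zu by simp
  then have "(\<Sum>k<u. z ^ k) = 0" using z1 by simp
  moreover have "om u (m * k) = z ^ k" for k by (simp add: z_def om_pow)
  ultimately show ?thesis using False by simp
qed

lemma prod_roots_dvd:
  fixes g :: "complex poly"
  assumes "finite A" "inj_on f A" "\<forall>a\<in>A. poly g (f a) = 0"
  shows "(\<Prod>a\<in>A. [:- f a, 1:]) dvd g"
  using assms
proof (induction A rule: finite_induct)
  case empty then show ?case by simp
next
  case (insert b A)
  then obtain Q where Q: "g = (\<Prod>a\<in>A. [:- f a, 1:]) * Q" by auto
  have "poly (\<Prod>a\<in>A. [:- f a, 1:]) (f b) \<noteq> 0"
    using insert.prems(1) insert.hyps by (auto simp: poly_prod)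
  moreover have "poly g (f b) = 0" using insert.prems by auto
  ultimately have "poly Q (f b) = 0" using Q by simp
  then obtain R where R: "Q = [:- f b, 1:] * R" using poly_eq_0_iff_dvd by blast
  have "(\<Prod>a\<in>insert b A. [:- f a, 1:]) = [:- f b, 1:] * (\<Prod>a\<in>A. [:- f a, 1:])"
    using insert.hyps by (rule prod.insert)
  moreover have "g = ([:- f b, 1:] * (\<Prod>a\<in>A. [:- f a, 1:])) * R" using Q R
    by (metis mult.assoc mult.commute)
  ultimately show ?case by (metis dvd_triv_left)
qed

lemma monic_dvd_eq:
  fixes f g :: "'a::idom poly"
  assumes "lead_coeff f = 1" "lead_coeff g = 1" "f dvd g" "degree f = degree g"
  shows "f = g"
proof -
  obtain q where q: "g = f * q" using assms by auto
  have "q \<noteq> 0" using q assms(2) by auto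
  have f0: "f \<noteq> 0" using assms(1) by auto
  have "degree q = 0" using q assms(4) f0 \<open>q \<noteq> 0\<close> by (simp add: degree_mult_eq)
  then obtain c where c: "q = [:c:]" by (metis degree_eq_zeroE)
  have "lead_coeff g = lead_coeff f * lead_coeff q" using q by (simp add: lead_coeff_mult)
  then have "c = 1" using assms c by simp
  then show ?thesis using q c by simp
qed

lemma xn1_lc: assumes "n > 0" shows "lead_coeff (monom (1::'a::comm_ring_1) n - 1) = 1"
    and "degree (monom (1::'a::comm_ring_1) n - 1) = n"
proof -
  have "degree (monom (1::'a) n + - 1) = n"
    using assms by (subst degree_add_eq_left) (auto simp: degree_monom_eq)
  then have d: "degree (monom (1::'a) n - 1) = n" by simp
  have "coeff (monom (1::'a) n - 1) n = 1" using assms by simp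
  with d show "lead_coeff (monom (1::'a::comm_ring_1) n - 1) = 1"
    "degree (monom (1::'a::comm_ring_1) n - 1) = n" using assms by auto
qed

lemma prod_om: assumes "n > 0"
  shows "(\<Prod>k<n. [:- om n k, 1:]) = monom 1 n - 1"
proof (rule monic_dvd_eq)
  show "lead_coeff (\<Prod>k<n. [:- om n k, 1:]) = 1" by (simp add: lead_coeff_prod)
  show "lead_coeff (monom (1::complex) n - 1) = 1" using xn1_lc[OF assms] by simp
  show "degree (\<Prod>k<n. [:- om n k, 1:]) = degree (monom (1::complex) n - 1)"
    using xn1_lc(2)[OF assms, where 'a=complex] by (simp add: degree_prod_eq_sum_degree)
  show "(\<Prod>k<n. [:- om n k, 1:]) dvd monom 1 n - 1"
  proof (rule prod_roots_dvd)
    show "inj_on (om n) {..<n}" using om_inj[OF assms] .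
    show "\<forall>a\<in>{..<n}. poly (monom 1 n - 1) (om n a) = 0"
      using assms by (auto simp: poly_monom om_pow om_eq_1)
  qed simp
qed



definition SS :: "nat \<Rightarrow> nat set" where "SS n = {k. k < n \<and> coprime k n}"

lemma SS_finite[simp]: "finite (SS n)" by (simp add: SS_def)

lemma cc_def: "cyclotomic_complex n = (\<Prod>k\<in>SS n. [:- om n k, 1:])"
  unfolding cyclotomic_complex_def SS_def om_def by (rule refl)

lemma cc_lc: "lead_coeff (cyclotomic_complex n) = 1"
  unfolding cc_def by (simp add: lead_coeff_prod)

lemma cc_degree: "degree (cyclotomic_complex n) = card (SS n)"
  unfolding cc_def by (simp add: degree_prod_eq_sum_degree)

lemma bij_divs:
  assumes n: "n > 0"
  shows "bij_betw (\<lambda>(d,k). k * (n div d)) (SIGMA d:{d. d dvd n}. SS d) {..<n}"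
proof (rule bij_betw_byWitness[where f'="\<lambda>j. (n div gcd j n, j div gcd j n)"])
  show "\<forall>a\<in>(SIGMA d:{d. d dvd n}. SS d).
      (\<lambda>j. (n div gcd j n, j div gcd j n)) ((\<lambda>(d,k). k * (n div d)) a) = a"
  proof safe
    fix d k assume d: "d dvd n" and k: "k \<in> SS d"
    obtain e where e: "n = d * e" using d by auto
    have "d > 0" "e > 0" using e n by auto
    have nd: "n div d = e" using e \<open>d > 0\<close> by simp
    have g1: "gcd (e * k) (e * d) = e * gcd k d" by (rule gcd_mult_distrib_nat[symmetric])
    have g2: "gcd k d = 1" using k by (simp add: SS_def)
    have g: "gcd (k * e) n = e" using g1 g2 e by (simp add: mult.commute)
    have "n div e = d" using e \<open>e > 0\<close> by simp
    then show "n div gcd (k * (n div d)) n = d" using g nd by simp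
    show "k * (n div d) div gcd (k * (n div d)) n = k" using g nd \<open>e > 0\<close> by simp
  qed
  show "\<forall>j\<in>{..<n}. (\<lambda>(d,k). k * (n div d)) ((\<lambda>j. (n div gcd j n, j div gcd j n)) j) = j"
  proof
    fix j assume "j \<in> {..<n}"
    define g where "g = gcd j n"
    obtain d where d: "n = g * d" using gcd_dvd2[of j n] unfolding g_def[symmetric] by (elim dvdE)
    obtain k where k: "j = g * k" using gcd_dvd1[of j n] unfolding g_def[symmetric] by (elim dvdE)
    have g0: "g > 0" using n by (simp add: g_def)
    have d0: "d > 0" using d n by (cases d) auto
    have A: "n div g = d" using d g0 by simp
    have B: "n div d = g" using d d0 by simp
    have C: "j div g = k" using k g0 by simp
    have "(j div g) * (n div (n div g)) = j" using A B C k by (simp add: mult.commute)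
    then show "(\<lambda>(d,k). k * (n div d)) ((\<lambda>j. (n div gcd j n, j div gcd j n)) j) = j"
      unfolding g_def by simp
  qed
  show "(\<lambda>(d,k). k * (n div d)) ` (SIGMA d:{d. d dvd n}. SS d) \<subseteq> {..<n}"
  proof safe
    fix d k assume d: "d dvd n" and k: "k \<in> SS d"
    obtain e where e: "n = d * e" using d by auto
    have "d > 0" "e > 0" using e n by auto
    have "k < d" using k by (simp add: SS_def)
    then have "k * e < d * e" using \<open>e > 0\<close> by simp
    moreover have "n div d = e" using e \<open>d > 0\<close> by simp
    ultimately show "k * (n div d) < n" using e by simp
  qed
  show "(\<lambda>j. (n div gcd j n, j div gcd j n)) ` {..<n} \<subseteq> (SIGMA d:{d. d dvd n}. SS d)"
  proof safe
    fix j assume j: "j < n"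
    define g where "g = gcd j n"
    obtain d where d: "n = g * d" using gcd_dvd2[of j n] unfolding g_def[symmetric] by (elim dvdE)
    obtain k where k: "j = g * k" using gcd_dvd1[of j n] unfolding g_def[symmetric] by (elim dvdE)
    have g0: "g > 0" using n by (simp add: g_def)
    have nd: "n div gcd j n = d" using d g0 unfolding g_def[symmetric] by simp
    have jk: "j div gcd j n = k" using k g0 unfolding g_def[symmetric] by simp
    show "n div gcd j n dvd n" using nd d by simp
    have cop: "coprime (j div gcd j n) (n div gcd j n)" using n by (intro div_gcd_coprime) auto
    have "g * k < g * d" using j d k by simp
    then have "k < d" by simp
    then show "j div gcd j n \<in> SS (n div gcd j n)" using cop nd jk by (simp add: SS_def)
  qed
qed

lemma cc_prod: assumes n: "n > 0"
  shows "(\<Prod>d\<in>{d. d dvd n}. cyclotomic_complex d) = monom 1 n - 1"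
proof -
  have fin: "finite {d. d dvd n}" using n by simp
  have "(\<Prod>d\<in>{d. d dvd n}. cyclotomic_complex d)
      = (\<Prod>d\<in>{d. d dvd n}. \<Prod>k\<in>SS d. [:- om d k, 1:])" by (simp add: cc_def)
  also have "\<dots> = (\<Prod>(d,k)\<in>(SIGMA d:{d. d dvd n}. SS d). [:- om d k, 1:])"
    using fin by (subst prod.Sigma) auto
  also have "\<dots> = (\<Prod>(d,k)\<in>(SIGMA d:{d. d dvd n}. SS d). [:- om n (k * (n div d)), 1:])"
    using n by (intro prod.cong refl) (auto simp: om_div)
  also have "\<dots> = (\<Prod>j<n. [:- om n j, 1:])"
    using prod.reindex_bij_betw[OF bij_divs[OF n], of "\<lambda>j. [:- om n j, 1:]"]
    by (simp add: case_prod_beta')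
  also have "\<dots> = monom 1 n - 1" using prod_om[OF n] .
  finally show ?thesis .
qed

lemma ci_lc: "lead_coeff (ci p) = of_int (lead_coeff p)" by simp

lemma cc_int: "\<exists>p. ci p = cyclotomic_complex n"
proof (induction n rule: less_induct)
  case (less n)
  show ?case
  proof (cases "n = 0")
    case True
    then have "SS n = {}" by (simp add: SS_def)
    then have "cyclotomic_complex n = 1" by (simp only: cc_def prod.empty)
    then show ?thesis by (metis ci_one)
  next
    case False
    then have n: "n > 0" by simp
    define D' where "D' = {d. d dvd n} - {n}"
    define P where "P d = (SOME p. ci p = cyclotomic_complex d)" for d
    have P: "ci (P d) = cyclotomic_complex d" if "d \<in> D'" for d
    proof -
      have "d < n" using that n by (auto simp: D'_def dest: dvd_imp_le)
      show ?thesis using someI_ex[OF less.IH[OF \<open>d < n\<close>]] unfolding P_def by simp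
    qed
    have fin: "finite D'" using n by (simp add: D'_def)
    define Q where "Q = (\<Prod>d\<in>D'. P d)"
    have ciQ: "ci Q = (\<Prod>d\<in>D'. cyclotomic_complex d)"
      unfolding Q_def ci_prod using P by (intro prod.cong) auto
    have "lead_coeff (P d) = 1" if "d \<in> D'" for d
    proof -
      have "(of_int (lead_coeff (P d)) :: complex) = 1"
        using P[OF that] cc_lc[of d] ci_lc[of "P d"] by simp
      then show ?thesis by simp
    qed
    then have lQ: "lead_coeff Q = 1" unfolding Q_def lead_coeff_prod by simp
    have DD: "{d. d dvd n} = insert n D'" by (auto simp: D'_def)
    have nD: "n \<notin> D'" by (simp add: D'_def)
    have "(\<Prod>d\<in>{d. d dvd n}. cyclotomic_complex d) = cyclotomic_complex n * (\<Prod>d\<in>D'. cyclotomic_complex d)"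
      unfolding DD by (rule prod.insert[OF fin nD])
    then have "(\<Prod>d\<in>{d. d dvd n}. cyclotomic_complex d) = cyclotomic_complex n * ci Q"
      using ciQ by simp
    then have "ci (monom 1 n - 1) = ci Q * cyclotomic_complex n"
      using cc_prod[OF n] by (simp add: mult.commute)
    from monic_div_int[OF lQ this] show ?thesis by metis
  qed
qed

lemma cyc_ci: "ci (cyclotomic n) = cyclotomic_complex n"
proof -
  obtain p where p: "ci p = cyclotomic_complex n" using cc_int[of n] by blast
  have "\<exists>!p. ci p = cyclotomic_complex n"
    by (intro ex1I[of _ p]) (auto simp: p[symmetric])
  then show ?thesis unfolding cyclotomic_def by (rule theI')
qed

lemma cyc_prod: assumes n: "n > 0"
  shows "(\<Prod>d\<in>{d. d dvd n}. cyclotomic d) = monom 1 n - 1"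
proof -
  have "ci (\<Prod>d\<in>{d. d dvd n}. cyclotomic d) = (\<Prod>d\<in>{d. d dvd n}. ci (cyclotomic d))"
    by (rule ci_prod)
  also have "\<dots> = (\<Prod>d\<in>{d. d dvd n}. cyclotomic_complex d)" by (simp only: cyc_ci)
  also have "\<dots> = ci (monom 1 n - 1)" using cc_prod[OF n] by simp
  finally have "ci (\<Prod>d\<in>{d. d dvd n}. cyclotomic d) = ci (monom 1 n - 1)" .
  then show ?thesis by (simp only: ci_eq_iff)
qed

lemma cyc_degree: "degree (cyclotomic n) = card (SS n)"
  by (metis ci_degree cyc_ci cc_degree)



lemma coeff_part: "coeff (part_poly r u j) i = (if i mod u = j then coeff r i else 0)"
proof -
  have "coeff (part_poly r u j) i =
      (\<Sum>i'\<le>degree r. if i' = i then (if i mod u = j then coeff r i else 0) else 0)"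
    unfolding part_poly_def coeff_sum by (intro sum.cong refl) (auto simp: coeff_monom)
  also have "\<dots> = (if i mod u = j then coeff r i else 0)"
    by (auto simp: coeff_eq_0 not_le)
  finally show ?thesis .
qed

lemma degree_part: "degree (part_poly r u j) \<le> degree r"
  by (rule degree_le) (auto simp: coeff_part coeff_eq_0)

lemma mod_key:
  fixes a i u :: nat
  assumes "a \<le> i" "u > 0"
  shows "((i - a) mod u = (u - a mod u) mod u) \<longleftrightarrow> i mod u = 0"
proof -
  define x where "x = a mod u"
  define y where "y = (i - a) mod u"
  have xu: "x < u" "y < u" using assms by (auto simp: x_def y_def)
  have "i mod u = (x + y) mod u" unfolding x_def y_def
    using assms(1) by (metis le_add_diff_inverse mod_add_eq)
  moreover have "(x + y) mod u = 0 \<longleftrightarrow> y = (u - x) mod u"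
  proof (cases "x = 0")
    case True then show ?thesis using xu by auto
  next
    case False
    then have "(u - x) mod u = u - x" using xu by simp
    moreover have "(x + y) mod u = 0 \<longleftrightarrow> x + y = u"
    proof
      assume "(x + y) mod u = 0"
      then have "u dvd x + y" by auto
      then obtain q where q: "x + y = u * q" by (elim dvdE)
      have "x + y < u * 2" "x + y > 0" using xu False by auto
      then have "q < 2" "q > 0" using q by auto
      then have "q = 1" by simp
      then show "x + y = u" using q by simp
    qed auto
    ultimately show ?thesis using xu by auto
  qed
  ultimately show ?thesis by (simp add: y_def x_def)
qed

lemma part_mult:
  assumes u: "u > 0"
  shows "part_poly (f * g) u 0 = (\<Sum>j<u. part_poly f u j * part_poly g u ((u - j) mod u))"
proof (rule poly_eqI)
  fix i
  have "coeff (\<Sum>j<u. part_poly f u j * part_poly g u ((u - j) mod u)) i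
     = (\<Sum>j<u. \<Sum>a\<le>i. (if a mod u = j then coeff f a else 0) *
            (if (i - a) mod u = (u - j) mod u then coeff g (i - a) else 0))"
    by (simp add: coeff_sum coeff_mult coeff_part)
  also have "\<dots> = (\<Sum>a\<le>i. \<Sum>j<u. (if a mod u = j then coeff f a else 0) *
            (if (i - a) mod u = (u - j) mod u then coeff g (i - a) else 0))"
    by (rule sum.swap)
  also have "\<dots> = (\<Sum>a\<le>i. if (i - a) mod u = (u - a mod u) mod u then coeff f a * coeff g (i - a) else 0)"
  proof (intro sum.cong refl)
    fix a
    have "(\<Sum>j<u. (if a mod u = j then coeff f a else 0) *
            (if (i - a) mod u = (u - j) mod u then coeff g (i - a) else 0))
        = (\<Sum>j<u. if j = a mod u then (if (i - a) mod u = (u - a mod u) mod u then coeff f a * coeff g (i - a) else 0) else 0)"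
      by (intro sum.cong refl) auto
    also have "\<dots> = (if (i - a) mod u = (u - a mod u) mod u then coeff f a * coeff g (i - a) else 0)"
      using u by (subst sum.delta) auto
    finally show "(\<Sum>j<u. (if a mod u = j then coeff f a else 0) *
            (if (i - a) mod u = (u - j) mod u then coeff g (i - a) else 0)) =
         (if (i - a) mod u = (u - a mod u) mod u then coeff f a * coeff g (i - a) else 0)" .
  qed
  also have "\<dots> = (\<Sum>a\<le>i. if i mod u = 0 then coeff f a * coeff g (i - a) else 0)"
    using u by (intro sum.cong refl) (simp add: mod_key)
  also have "\<dots> = coeff (part_poly (f * g) u 0) i"
    by (simp add: coeff_part coeff_mult)
  finally show "coeff (part_poly (f * g) u 0) i =
      coeff (\<Sum>j<u. part_poly f u j * part_poly g u ((u - j) mod u)) i" by simp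
qed

lemma smult_sum_right: "smult c (sum f A) = (\<Sum>x\<in>A. smult c (f x))"
  by (induction A rule: infinite_finite_induct) (auto simp: smult_add_right)

lemma unit_comb:
  fixes r F :: "int poly"
  assumes u: "u > 0" and dv: "r dvd F" and pF: "part_poly F u 0 = [:e:]" and e: "e * e = 1"
  shows "\<exists>q. [:c:] = (\<Sum>j<u. part_poly r u j * q j)"
proof -
  obtain h where h: "F = r * h" using dv by auto
  define q where "q j = smult (c * e) (part_poly h u ((u - j) mod u))" for j
  have "(\<Sum>j<u. part_poly r u j * q j) = smult (c * e) (\<Sum>j<u. part_poly r u j * part_poly h u ((u - j) mod u))"
    by (simp add: q_def smult_sum_right)
  also have "\<dots> = smult (c * e) [:e:]" using part_mult[OF u, of r h] pF h by simp
  also have "\<dots> = [:c:]" using e by (simp add: mult.assoc)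
  finally show ?thesis by metis
qed

lemma Cong_one:
  assumes "\<And>u c. 1 < u \<Longrightarrow> u \<le> degree r + 1 \<Longrightarrow> \<exists>q. [:c:] = (\<Sum>j<u. part_poly r u j * q j)"
  shows "Cong r = 1"
proof -
  have "c \<in> cong_ideal r" for c unfolding cong_ideal_def using assms by blast
  then have ci: "cong_ideal r = UNIV" by blast
  have "x \<in> {k * (1::int) |k. True}" for x :: int
  proof -
    have "x = x * 1" by simp
    then show ?thesis by blast
  qed
  then have U: "UNIV = {k * (1::int) |k. True}" by blast
  show ?thesis unfolding Cong_def ci
  proof (rule the_equality)
    show "0 \<le> (1::int) \<and> UNIV = {k * (1::int) |k. True}" by (rule conjI[OF _ U]) simp
  next
    fix g :: int assume g: "0 \<le> g \<and> UNIV = {k * g |k. True}"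
    have "(1::int) \<in> {k * g |k. True}" using g by blast
    then obtain k where k: "1 = k * g" by blast
    then have gk: "g * k = 1" by (simp add: mult.commute)
    have "0 \<le> g" using g by blast
    moreover have "g \<noteq> 0" using gk by auto
    ultimately have "0 < g" by linarith
    then show "g = 1" using pos_zmult_eq_1_iff[of g k] gk by blast
  qed
qed

lemma Cong_zero:
  assumes "cong_ideal r = {0}"
  shows "Cong r = 0"
  unfolding Cong_def assms
proof (rule the_equality)
  have "{k * (0::int) |k. True} = {0}" by auto
  then show "0 \<le> (0::int) \<and> {0} = {k * (0::int) |k. True}" by simp
next
  fix g :: int assume g: "0 \<le> g \<and> {0} = {k * g |k. True}"
  have "1 * g \<in> {k * g |k. True}" by blast
  then have "1 * g \<in> {0}" using g by simp
  then show "g = 0" by simp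
qed

lemma poly_N:
  fixes p :: "complex poly"
  assumes "degree p \<le> N"
  shows "poly p x = (\<Sum>i\<le>N. coeff p i * x ^ i)"
proof -
  have "poly p x = (\<Sum>i\<le>degree p. coeff p i * x ^ i)" by (rule poly_altdef)
  also have "\<dots> = (\<Sum>i\<le>N. coeff p i * x ^ i)"
    by (rule sum.mono_neutral_left) (use assms in \<open>auto simp: coeff_eq_0\<close>)
  finally show ?thesis .
qed

lemma mod_dvd_key:
  fixes i j u :: nat
  assumes "j < u"
  shows "u dvd (i + (u - j)) \<longleftrightarrow> i mod u = j"
proof -
  have "u dvd (i + (u - j)) \<longleftrightarrow> (i mod u + (u - j)) mod u = 0"
    by (simp add: mod_add_left_eq dvd_eq_mod_eq_0)
  also have "\<dots> \<longleftrightarrow> i mod u + (u - j) = u"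
  proof
    assume a: "(i mod u + (u - j)) mod u = 0"
    have "i mod u < u" using assms by simp
    moreover have "u - j \<le> u" "u - j > 0" using assms by auto
    ultimately have "i mod u + (u - j) < 2 * u" "i mod u + (u - j) > 0" by linarith+
    moreover from a have "u dvd i mod u + (u - j)" by auto
    then obtain q where q: "i mod u + (u - j) = u * q" by (elim dvdE)
    ultimately have "q < 2" "q > 0" by (auto simp: mult.commute)
    then have "q = 1" by simp
    then show "i mod u + (u - j) = u" using q by simp
  qed auto
  also have "\<dots> \<longleftrightarrow> i mod u = j" using assms by auto
  finally show ?thesis .
qed

lemma filter_zero:
  fixes r :: "int poly" and \<alpha> :: complex
  assumes u: "u > 0" and j: "j < u"
    and z: "\<And>k. k < u \<Longrightarrow> poly (ci r) (om u k * \<alpha>) = 0"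
  shows "poly (ci (part_poly r u j)) \<alpha> = 0"
proof -
  define N where "N = degree r"
  define c where "c i = (of_int (coeff r i) :: complex)" for i
  have P: "poly (ci (part_poly r u j)) \<alpha> = (\<Sum>i\<le>N. if i mod u = j then c i * \<alpha> ^ i else 0)"
    by (subst poly_N[where N=N]) (auto simp: N_def degree_part coeff_part c_def intro!: sum.cong)
  have R: "poly (ci r) x = (\<Sum>i\<le>N. c i * x ^ i)" for x
    by (subst poly_N[where N=N]) (auto simp: N_def c_def)
  have "0 = (\<Sum>k<u. om u ((u - j) * k) * poly (ci r) (om u k * \<alpha>))"
    using z by simp
  also have "\<dots> = (\<Sum>k<u. \<Sum>i\<le>N. c i * \<alpha> ^ i * om u ((i + (u - j)) * k))"
  proof (intro sum.cong refl)
    fix k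
    have "om u ((u - j) * k) * poly (ci r) (om u k * \<alpha>) =
        (\<Sum>i\<le>N. c i * \<alpha> ^ i * (om u ((u - j) * k) * om u k ^ i))"
      unfolding R sum_distrib_left by (intro sum.cong refl) (simp add: power_mult_distrib algebra_simps)
    also have "\<dots> = (\<Sum>i\<le>N. c i * \<alpha> ^ i * om u ((i + (u - j)) * k))"
      by (intro sum.cong refl) (simp add: om_pow om_mult algebra_simps)
    finally show "om u ((u - j) * k) * poly (ci r) (om u k * \<alpha>) =
        (\<Sum>i\<le>N. c i * \<alpha> ^ i * om u ((i + (u - j)) * k))" .
  qed
  also have "\<dots> = (\<Sum>i\<le>N. c i * \<alpha> ^ i * (\<Sum>k<u. om u ((i + (u - j)) * k)))"
    by (subst sum.swap) (simp add: sum_distrib_left)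
  also have "\<dots> = (\<Sum>i\<le>N. c i * \<alpha> ^ i * (if i mod u = j then of_nat u else 0))"
    using u j by (intro sum.cong refl) (simp only: om_geom[OF u] mod_dvd_key[OF j])
  also have "\<dots> = of_nat u * (\<Sum>i\<le>N. if i mod u = j then c i * \<alpha> ^ i else 0)"
    by (simp add: sum_distrib_left if_distrib mult_ac cong: if_cong)
  finally have "of_nat u * poly (ci (part_poly r u j)) \<alpha> = 0" using P by simp
  then show ?thesis using u by simp
qed

lemma zero_ideal:
  fixes r :: "int poly" and \<alpha> :: complex
  assumes "1 < u" "u \<le> degree r + 1"
    and z: "\<And>j. j < u \<Longrightarrow> poly (ci (part_poly r u j)) \<alpha> = 0"
  shows "cong_ideal r = {0}"
proof
  show "{0} \<subseteq> cong_ideal r"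
    by (auto simp: cong_ideal_def intro!: exI[of _ "\<lambda>_. 0"])
  show "cong_ideal r \<subseteq> {0}"
  proof
    fix c assume "c \<in> cong_ideal r"
    then obtain q where q: "[:c:] = (\<Sum>j<u. part_poly r u j * q j)"
      using assms unfolding cong_ideal_def by blast
    have "(of_int c :: complex) = poly (ci [:c:]) \<alpha>" by simp
    also have "\<dots> = (\<Sum>j<u. poly (ci (part_poly r u j)) \<alpha> * poly (ci (q j)) \<alpha>)"
      unfolding q ci_sum poly_sum by simp
    also have "\<dots> = 0" using z by simp
    finally show "c \<in> {0}" by simp
  qed
qed



lemma coeff_const_poly: "coeff [:c:] i = (if i = 0 then c else 0)"
  by (cases i) auto

lemma cyc_dvd_xn: assumes n: "n > 0" shows "cyclotomic n dvd (monom 1 n - 1)"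
proof -
  have "cyclotomic n dvd (\<Prod>d\<in>{d. d dvd n}. cyclotomic d)"
    by (rule dvd_prodI) (use n in auto)
  then show ?thesis using cyc_prod[OF n] by simp
qed

lemma geom_poly:
  "(monom (1::int) m - 1) * (\<Sum>k<p. monom 1 (m * k)) = monom 1 (m * p) - 1"
proof -
  have "(\<Sum>k<p. monom (1::int) (m * k)) = (\<Sum>k<p. monom 1 m ^ k)"
    by (simp add: monom_power)
  moreover have "monom (1::int) m ^ p - 1 = (monom 1 m - 1) * (\<Sum>k<p. monom 1 m ^ k)"
    by (rule power_diff_1_eq)
  moreover have "monom (1::int) m ^ p = monom 1 (m * p)" by (simp add: monom_power)
  ultimately show ?thesis by simp
qed

lemma xm1_nz: assumes "m > 0" shows "monom (1::int) m - 1 \<noteq> 0"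
proof
  assume "monom (1::int) m - 1 = 0"
  then have "coeff (monom (1::int) m - 1) m = 0" by simp
  then show False using assms by simp
qed

lemma cyc_dvd_G:
  assumes p: "prime p" and m: "m > 0" and n: "n = p * m"
  shows "cyclotomic n dvd (\<Sum>k<p. monom 1 (m * k))"
proof -
  have n0: "n > 0" using p m n by (simp add: prime_gt_0_nat)
  have p1: "p > 1" using prime_gt_1_nat[OF p] .
  define A where "A = {d. d dvd n}"
  define B where "B = {d. d dvd m}"
  have BA: "B \<subseteq> A" unfolding A_def B_def n by auto
  have finA: "finite A" unfolding A_def using n0 by simp
  define R where "R = (\<Prod>d\<in>A - B. cyclotomic d)"
  have "monom 1 n - 1 = (\<Prod>d\<in>A. cyclotomic d)" using cyc_prod[OF n0] by (simp add: A_def)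
  also have "\<dots> = R * (\<Prod>d\<in>B. cyclotomic d)" unfolding R_def by (rule prod.subset_diff[OF BA finA])
  also have "(\<Prod>d\<in>B. cyclotomic d) = monom 1 m - 1" using cyc_prod[OF m] by (simp add: B_def)
  finally have "(monom 1 m - 1) * (\<Sum>k<p. monom 1 (m * k)) = (monom 1 m - 1) * R"
    using geom_poly[of m p] n by (simp add: mult.commute)
  then have GR: "(\<Sum>k<p. monom (1::int) (m * k)) = R" using xm1_nz[OF m] by simp
  have "m < n" using n m p1 by simp
  then have "\<not> n dvd m" using m by (auto dest: dvd_imp_le)
  then have "n \<in> A - B" by (simp add: A_def B_def)
  then have "cyclotomic n dvd R" unfolding R_def using finA by (intro dvd_prodI) auto
  then show ?thesis using GR by simp
qed

lemma part_xn:
  assumes u: "u > 0" and nd: "\<not> u dvd n" and n: "n > 0"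
  shows "part_poly (monom 1 n - 1) u 0 = [:-1:]"
proof (rule poly_eqI)
  fix i
  show "coeff (part_poly (monom 1 n - 1) u 0) i = coeff [:- 1:] i"
  proof (cases "i mod u = 0")
    case True
    then have "i \<noteq> n" using nd by auto
    then show ?thesis using True by (auto simp: coeff_part coeff_monom coeff_const_poly)
  next
    case False
    have "i \<noteq> 0"
    proof
      assume "i = 0" with False show False by simp
    qed
    then show ?thesis using False by (auto simp: coeff_part coeff_const_poly)
  qed
qed

lemma part_G:
  assumes u: "u > 0" and p: "prime p" and pu: "p dvd u" and pm: "\<not> p dvd m"
  shows "part_poly (\<Sum>k<p. monom 1 (m * k)) u 0 = [:1:]"
proof (rule poly_eqI)
  fix i
  have p0: "p > 0" using p by (simp add: prime_gt_0_nat)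
  have cG: "coeff (\<Sum>k<p. monom (1::int) (m * k)) i = (\<Sum>k<p. if m * k = i then 1 else 0)"
    by (simp add: coeff_sum coeff_monom)
  show "coeff (part_poly (\<Sum>k<p. monom 1 (m * k)) u 0) i = coeff [:1:] i"
  proof (cases "i mod u = 0")
    case True
    have "(\<Sum>k<p. if m * k = i then 1 else 0) = (\<Sum>k<p. if k = 0 then (if i = 0 then 1 else 0) else (0::int))"
    proof (intro sum.cong refl)
      fix k assume k: "k \<in> {..<p}"
      have "m * k = i \<longleftrightarrow> k = 0 \<and> i = 0"
      proof
        assume mk: "m * k = i"
        have "u dvd i" using True by auto
        then have "p dvd m * k" using pu mk by (auto intro: dvd_trans)
        then have "p dvd k" using p pm by (auto simp: prime_dvd_mult_iff)
        then have "k = 0" using k by (auto dest: dvd_imp_le)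
        then show "k = 0 \<and> i = 0" using mk by simp
      qed auto
      then show "(if m * k = i then 1 else 0) = (if k = 0 then (if i = 0 then 1 else 0) else (0::int))"
        by auto
    qed
    also have "\<dots> = (if i = 0 then 1 else 0)" using p0 by (subst sum.delta) auto
    finally show ?thesis using True cG by (simp add: coeff_part coeff_const_poly)
  next
    case False
    have "i \<noteq> 0"
    proof
      assume "i = 0" with False show False by simp
    qed
    then show ?thesis using False by (auto simp: coeff_part coeff_const_poly)
  qed
qed

lemma coeff_Psi: "coeff (Psi n) i = (if i < n then 1 else 0)"
  unfolding Psi_def by (simp add: coeff_sum coeff_monom)

lemma degree_Psi: assumes "n \<ge> 1" shows "degree (Psi n) = n - 1"
proof (rule antisym)
  show "degree (Psi n) \<le> n - 1" by (rule degree_le) (auto simp: coeff_Psi)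
  show "n - 1 \<le> degree (Psi n)" by (rule le_degree) (use assms in \<open>simp add: coeff_Psi\<close>)
qed

lemma Psi_geom: "(monom 1 1 - 1) * Psi n = monom 1 n - 1"
  using geom_poly[of 1 n] unfolding Psi_def by simp

lemma poly_Psi: "poly (ci (Psi n)) z = (\<Sum>i<n. z ^ i)"
  unfolding Psi_def ci_sum by (simp add: poly_sum poly_monom)

lemma part_Psi: assumes "p > 0" shows "part_poly (Psi p) p 0 = [:1:]"
proof (rule poly_eqI)
  fix i
  show "coeff (part_poly (Psi p) p 0) i = coeff [:1:] i"
    using assms by (auto simp: coeff_part coeff_Psi coeff_const_poly elim!: dvdE)
qed



lemma cong_sqfree:
  assumes n: "n \<ge> 1" and sq: "squarefree n"
  shows "Cong (cyclotomic n) = 1"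
proof (rule Cong_one)
  fix u :: nat and c :: int
  assume u: "1 < u" and "u \<le> degree (cyclotomic n) + 1"
  have n0: "n > 0" using n by simp
  obtain p where p: "prime p" "p dvd u" using prime_factor_nat[of u] u by auto
  have u0: "u > 0" using u by simp
  show "\<exists>q. [:c:] = (\<Sum>j<u. part_poly (cyclotomic n) u j * q j)"
  proof (cases "p dvd n")
    case False
    have "\<not> u dvd n" using False p(2) dvd_trans by blast
    then have pF: "part_poly (monom 1 n - 1) u 0 = [:-1:]" using part_xn[OF u0 _ n0] by simp
    show ?thesis by (rule unit_comb[OF u0 cyc_dvd_xn[OF n0] pF]) simp
  next
    case True
    then obtain m where nm: "n = p * m" by (elim dvdE)
    have m0: "m > 0" using n0 nm by (cases m) auto
    have pm: "\<not> p dvd m"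
    proof
      assume "p dvd m"
      then obtain k where "m = p * k" by (elim dvdE)
      then have "n = p ^ 2 * k" using nm by (simp add: power2_eq_square)
      then have "p ^ 2 dvd n" by simp
      then have "p dvd 1" using sq unfolding squarefree_def by blast
      then show False using p(1) by simp
    qed
    show ?thesis
      by (rule unit_comb[OF u0 cyc_dvd_G[OF p(1) m0 nm] part_G[OF u0 p(1) p(2) pm]]) simp
  qed
qed

lemma cong_nonsqfree:
  assumes n: "n \<ge> 1" and sq: "\<not> squarefree n"
  shows "Cong (cyclotomic n) = 0"
proof -
  have n0: "n > 0" "n \<noteq> 0" using n by auto
  obtain p where p: "prime p" "p ^ 2 dvd n"
    using sq squarefree_factorial_semiring[OF n0(2)] by auto
  obtain k where nk: "n = p ^ 2 * k" using p(2) by (elim dvdE)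
  define m where "m = p * k"
  have nm: "n = p * m" using nk by (simp add: m_def power2_eq_square)
  have pm: "p dvd m" by (simp add: m_def)
  have p1: "p > 1" using prime_gt_1_nat[OF p(1)] .
  have m0: "m > 0" using n0 nm by (cases m) auto
  have "p \<le> m" using pm m0 by (simp add: dvd_imp_le)
  then have m2: "m \<ge> 2" using p1 by simp
  have pn: "p dvd n" using nm by simp
  have ndp: "n div p = m" using nm p1 by simp
  have inS: "k * m + 1 \<in> SS n" if k: "k < p" for k
  proof -
    have "(k + 1) * m \<le> p * m" using k by (intro mult_le_mono1) simp
    then have "k * m + m \<le> n" using nm by (simp add: algebra_simps)
    then have lt: "k * m + 1 < n" using m2 by simp
    have c1: "coprime (k * m + 1) m"
    proof (rule coprimeI)
      fix c assume c: "c dvd k * m + 1" "c dvd m"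
      then have "c dvd k * m" by simp
      then have "c dvd 1" using c(1) dvd_add_right_iff by blast
      then show "is_unit c" by simp
    qed
    have c2: "coprime (k * m + 1) p"
    proof (rule coprimeI)
      fix c assume c: "c dvd k * m + 1" "c dvd p"
      have "c dvd m" using c(2) pm by (rule dvd_trans)
      then show "is_unit c" using c1 c(1) by (auto dest: coprime_common_divisor)
    qed
    have "coprime (k * m + 1) n" using c1 c2 nm by simp
    then show ?thesis using lt by (simp add: SS_def)
  qed
  have "card {..<p} \<le> card (SS n)"
  proof (rule card_inj_on_le[of "\<lambda>k. k * m + 1"])
    show "inj_on (\<lambda>k. k * m + 1) {..<p}" using m0 by (auto simp: inj_on_def)
    show "(\<lambda>k. k * m + 1) ` {..<p} \<subseteq> SS n" using inS by auto
  qed simp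
  then have deg: "p \<le> degree (cyclotomic n) + 1" by (simp add: cyc_degree)
  have z: "poly (ci (cyclotomic n)) (om p k * om n 1) = 0" if k: "k < p" for k
  proof -
    have "om p k * om n 1 = om n (k * m + 1)"
      using om_div[OF pn n0(1), of k] ndp by (simp add: om_mult)
    moreover have "poly (cyclotomic_complex n) (om n (k * m + 1)) = 0"
      unfolding cc_def poly_prod using inS[OF k] by (auto intro: bexI[of _ "k * m + 1"])
    ultimately show ?thesis by (simp add: cyc_ci)
  qed
  have "cong_ideal (cyclotomic n) = {0}"
  proof (rule zero_ideal[of p _ "om n 1"])
    show "1 < p" using p1 .
    show "p \<le> degree (cyclotomic n) + 1" using deg .
    fix j assume "j < p"
    then show "poly (ci (part_poly (cyclotomic n) p j)) (om n 1) = 0"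
      using p1 z by (intro filter_zero) auto
  qed
  then show ?thesis by (rule Cong_zero)
qed

lemma cong_psi_comp:
  assumes n: "n > 1" and np: "\<not> prime n"
  shows "Cong (Psi n) = 0"
proof -
  have n0: "n > 0" using n by simp
  obtain p where p: "prime p" "p dvd n" using prime_factor_nat[of n] n by auto
  obtain b where nb: "n = p * b" using p(2) by (elim dvdE)
  have p1: "p > 1" using prime_gt_1_nat[OF p(1)] .
  have b0: "b \<noteq> 0" using nb n0 by auto
  have b1: "b \<noteq> 1" using nb np p(1) by auto
  have b2: "b \<ge> 2" using b0 b1 by simp
  have pn: "p \<le> n" using p(2) n0 by (simp add: dvd_imp_le)
  have deg: "p \<le> degree (Psi n) + 1" using pn degree_Psi[of n] n by simp
  have ndp: "n div p = b" using nb p1 by simp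
  have z: "poly (ci (Psi n)) (om p k * om n 1) = 0" if k: "k < p" for k
  proof -
    define \<beta> where "\<beta> = om n (k * b + 1)"
    have "om p k * om n 1 = \<beta>"
      using om_div[OF p(2) n0, of k] ndp by (simp add: om_mult \<beta>_def)
    moreover have "(\<Sum>i<n. \<beta> ^ i) = 0"
    proof -
      have "(k + 1) * b \<le> p * b" using k by (intro mult_le_mono1) simp
      then have "k * b + b \<le> n" using nb by (simp add: algebra_simps)
      then have lt: "k * b + 1 < n" using b2 by simp
      have "\<not> n dvd (k * b + 1)" using lt by (auto dest: dvd_imp_le)
      then have b1: "\<beta> \<noteq> 1" using n0 by (simp add: \<beta>_def om_eq_1)
      have "\<beta> ^ n = 1" using n0 by (simp add: \<beta>_def om_pow om_eq_1)
      then have "(\<beta> - 1) * (\<Sum>i<n. \<beta> ^ i) = 0" using power_diff_1_eq[of \<beta> n] by simp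
      then show ?thesis using b1 by simp
    qed
    ultimately show ?thesis by (simp add: poly_Psi)
  qed
  have "cong_ideal (Psi n) = {0}"
  proof (rule zero_ideal[of p _ "om n 1"])
    show "1 < p" using p1 .
    show "p \<le> degree (Psi n) + 1" using deg .
    fix j assume "j < p"
    then show "poly (ci (part_poly (Psi n) p j)) (om n 1) = 0"
      using p1 z by (intro filter_zero) auto
  qed
  then show ?thesis by (rule Cong_zero)
qed

lemma cong_psi_one:
  assumes n: "n = 1 \<or> prime n"
  shows "Cong (Psi n) = 1"
proof (rule Cong_one)
  fix u :: nat and c :: int
  assume u: "1 < u" "u \<le> degree (Psi n) + 1"
  have n1: "n \<ge> 1" using n by (auto dest: prime_gt_0_nat)
  then have un: "u \<le> n" using u degree_Psi[OF n1] by simp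
  have u0: "u > 0" using u by simp
  have pn: "prime n" using n u un by auto
  show "\<exists>q. [:c:] = (\<Sum>j<u. part_poly (Psi n) u j * q j)"
  proof (cases "u = n")
    case True
    show ?thesis unfolding True
      by (rule unit_comb[OF _ dvd_refl part_Psi]) (use n1 in auto)
  next
    case False
    then have "u < n" using un by simp
    then have nd: "\<not> u dvd n" using prime_nat_not_dvd[OF pn, of u] u by simp
    have pF: "part_poly (monom 1 n - 1) u 0 = [:-1:]" using part_xn[OF u0 nd] n1 by simp
    have dv: "Psi n dvd (monom 1 n - 1)" using Psi_geom[of n] by (metis dvd_triv_right)
    show ?thesis by (rule unit_comb[OF u0 dv pF]) simp
  qed
qed

theorem proposition4p10:
  fixes n :: nat
  assumes "n \<ge> 1"
  shows "(squarefree n \<longrightarrow> Cong (cyclotomic n) = 1)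
       \<and> (\<not> squarefree n \<longrightarrow> Cong (cyclotomic n) = 0)
       \<and> (Cong (Psi n) = 0 \<longleftrightarrow> (n > 1 \<and> \<not> prime n))"
proof (intro conjI impI)
  show "squarefree n \<Longrightarrow> Cong (cyclotomic n) = 1" using cong_sqfree assms by blast
  show "\<not> squarefree n \<Longrightarrow> Cong (cyclotomic n) = 0" using cong_nonsqfree assms by blast
  show "Cong (Psi n) = 0 \<longleftrightarrow> (n > 1 \<and> \<not> prime n)"
  proof
    assume C: "Cong (Psi n) = 0"
    have "\<not> (n = 1 \<or> prime n)"
    proof
      assume "n = 1 \<or> prime n"
      then have "Cong (Psi n) = 1" by (rule cong_psi_one)
      with C show False by simp
    qed
    then show "n > 1 \<and> \<not> prime n" using assms by auto
  next
    assume "n > 1 \<and> \<not> prime n"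
    then show "Cong (Psi n) = 0" using cong_psi_comp by blast
  qed
qed


end
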